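(* Let $a>0$, $b,c\ge 0$, and consider the system $$\dot x=x(1-y+cx-axz),\qquad \dot y=y(-1+x),\qquad \dot z=z(-b+ax^2).$$ Let $f$ be an irreducible Darboux polynomial of degree greater than one with non-zero cofactor $$K=\alpha_0+\alpha_1x+\alpha_2y+\alpha_3z+N_4a\,x^2-N_6a\,xz,$$ where $\alpha_i\in\mathbb{C}$ and $N_4,N_6\in\mathbb{N}\cup\{0\}$. Then $\alpha_0=\alpha_1=\alpha_3=N_4=N_6=0$.
   Context: A Darboux polynomial is $f\in\mathbb{C}[x,y,z]$ with $x(1-y+cx-axz)f_x+y(-1+x)f_y+z(-b+ax^2)f_z=Kf$ for a polynomial cofactor $K$ of degree at most two. *)

theory Defs
  imports Complex_Main "HOL-Computational_Algebra.Polynomial_Factorial"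
begin

text \<open>Polynomials in C[x,y,z], represented as nested univariate polynomials:
  outermost variable z, middle y, innermost x, i.e. C[x][y][z].\<close>

type_synonym mpoly3 = "complex poly poly poly"

definition cst3 :: "complex \<Rightarrow> mpoly3" where
  "cst3 r = [:[:[:r:]:]:]"

definition X3 :: mpoly3 where "X3 = [:[:[:0, 1:]:]:]"
definition Y3 :: mpoly3 where "Y3 = [:[:0, 1:]:]"
definition Z3 :: mpoly3 where "Z3 = [:0, 1:]"

definition dX3 :: "mpoly3 \<Rightarrow> mpoly3" where "dX3 f = map_poly (map_poly pderiv) f"
definition dY3 :: "mpoly3 \<Rightarrow> mpoly3" where "dY3 f = map_poly pderiv f"
definition dZ3 :: "mpoly3 \<Rightarrow> mpoly3" where "dZ3 f = pderiv f"

definition coeff3 :: "mpoly3 \<Rightarrow> nat \<Rightarrow> nat \<Rightarrow> nat \<Rightarrow> complex" where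
  "coeff3 f i j k = coeff (coeff (coeff f k) j) i"

definition tdeg3 :: "mpoly3 \<Rightarrow> nat" where
  "tdeg3 f = Max (insert 0 {i + j + k | i j k. coeff3 f i j k \<noteq> 0})"

definition Xfield :: "real \<Rightarrow> real \<Rightarrow> real \<Rightarrow> mpoly3 \<Rightarrow> mpoly3" where
  "Xfield a b c f =
     X3 * (1 - Y3 + cst3 (of_real c) * X3 - cst3 (of_real a) * X3 * Z3) * dX3 f
   + Y3 * (-1 + X3) * dY3 f
   + Z3 * (- cst3 (of_real b) + cst3 (of_real a) * X3 ^ 2) * dZ3 f"

definition darboux :: "real \<Rightarrow> real \<Rightarrow> real \<Rightarrow> mpoly3 \<Rightarrow> mpoly3 \<Rightarrow> bool" where
  "darboux a b c f K \<longleftrightarrow> f \<noteq> 0 \<and> tdeg3 K \<le> 2 \<and> Xfield a b c f = K * f"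

end

theory Submission
  imports Defs
begin

definition C3 :: "mpoly3 \<Rightarrow> int \<Rightarrow> int \<Rightarrow> int \<Rightarrow> complex" where
  "C3 f i j k = (if 0 \<le> i \<and> 0 \<le> j \<and> 0 \<le> k then coeff3 f (nat i) (nat j) (nat k) else 0)"

lemma C3_neg: "i < 0 \<or> j < 0 \<or> k < 0 \<Longrightarrow> C3 f i j k = 0"
  by (auto simp: C3_def)

lemma C3_add: "C3 (f + g) i j k = C3 f i j k + C3 g i j k"
  by (simp add: C3_def coeff3_def)
lemma C3_diff: "C3 (f - g) i j k = C3 f i j k - C3 g i j k"
  by (simp add: C3_def coeff3_def)
lemma C3_uminus: "C3 (- f) i j k = - C3 f i j k"
  by (simp add: C3_def coeff3_def)

lemma C3_cst: "C3 (cst3 r * f) i j k = r * C3 f i j k"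
  by (simp add: C3_def coeff3_def cst3_def)

lemma coeff_pCons0: "coeff (pCons 0 p) n = (if n = 0 then 0 else coeff p (n - 1))"
  by (cases n) auto

lemma coeff_X1: "coeff ([:0, 1:] * (p :: 'a :: comm_ring_1 poly)) n = (if n = 0 then 0 else coeff p (n - 1))"
  by (cases n) auto

lemma C3_X: "C3 (X3 * f) i j k = C3 f (i - 1) j k"
  by (auto simp: C3_def coeff3_def X3_def coeff_X1 coeff_pCons0 nat_diff_distrib')

lemma C3_Y: "C3 (Y3 * f) i j k = C3 f i (j - 1) k"
  by (auto simp: C3_def coeff3_def Y3_def coeff_X1 coeff_pCons0 nat_diff_distrib')

lemma C3_Z: "C3 (Z3 * f) i j k = C3 f i j (k - 1)"
  by (auto simp: C3_def coeff3_def Z3_def coeff_X1 coeff_pCons0 nat_diff_distrib')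

lemma coeff_of_nat_mult: "coeff (of_nat n * (p :: 'a :: comm_ring_1 poly)) m = of_nat n * coeff p m"
  by (simp add: of_nat_poly)

lemma coeff_pderiv_pp: "coeff (pderiv (q :: complex poly poly)) n = smult (of_nat (Suc n)) (coeff q (Suc n))"
  by (simp add: coeff_pderiv of_nat_poly del: of_nat_Suc)

lemma coeff_pderiv_ppp: "coeff (pderiv (q :: complex poly poly poly)) n = smult (of_nat (Suc n)) (coeff q (Suc n))"
  by (simp add: coeff_pderiv of_nat_poly del: of_nat_Suc)

lemma coeff3_dX: "coeff3 (dX3 f) i j k = of_nat (Suc i) * coeff3 f (Suc i) j k"
  by (simp add: coeff3_def dX3_def coeff_map_poly coeff_pderiv del: of_nat_Suc)

lemma coeff3_dY: "coeff3 (dY3 f) i j k = of_nat (Suc j) * coeff3 f i (Suc j) k"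
  by (simp add: coeff3_def dY3_def coeff_map_poly coeff_pderiv_pp of_nat_poly del: of_nat_Suc)

lemma coeff3_dZ: "coeff3 (dZ3 f) i j k = of_nat (Suc k) * coeff3 f i j (Suc k)"
  by (simp add: coeff3_def dZ3_def coeff_pderiv_ppp of_nat_poly del: of_nat_Suc)

lemma of_nat_Suc_nat: "0 \<le> (v::int) \<Longrightarrow> (of_nat (Suc (nat v)) :: complex) = of_int (v + 1)"
  by (simp add: of_nat_nat add.commute)

lemma C3_dX: "C3 (dX3 f) i j k = of_int (i + 1) * C3 f (i + 1) j k"
proof -
  have "i = -1 \<or> i < -1 \<or> 0 \<le> i" by linarith
  then show ?thesis
  proof (elim disjE)
    assume h: "0 \<le> i"
    have n: "nat (i + 1) = Suc (nat i)" using h by simp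
    show ?thesis unfolding C3_def coeff3_dX n of_nat_Suc_nat[OF h] using h by simp
  qed (auto simp: C3_def)
qed

lemma C3_dY: "C3 (dY3 f) i j k = of_int (j + 1) * C3 f i (j + 1) k"
proof -
  have "j = -1 \<or> j < -1 \<or> 0 \<le> j" by linarith
  then show ?thesis
  proof (elim disjE)
    assume h: "0 \<le> j"
    have n: "nat (j + 1) = Suc (nat j)" using h by simp
    show ?thesis unfolding C3_def coeff3_dY n of_nat_Suc_nat[OF h] using h by simp
  qed (auto simp: C3_def)
qed

lemma C3_dZ: "C3 (dZ3 f) i j k = of_int (k + 1) * C3 f i j (k + 1)"
proof -
  have "k = -1 \<or> k < -1 \<or> 0 \<le> k" by linarith
  then show ?thesis
  proof (elim disjE)
    assume h: "0 \<le> k"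
    have n: "nat (k + 1) = Suc (nat k)" using h by simp
    show ?thesis unfolding C3_def coeff3_dZ n of_nat_Suc_nat[OF h] using h by simp
  qed (auto simp: C3_def)
qed

lemma Xfield_expand: "Xfield a b c f = X3 * dX3 f - Y3 * (X3 * dX3 f) + cst3 (of_real c) * (X3 * (X3 * dX3 f))
   - cst3 (of_real a) * (X3 * (Z3 * (X3 * dX3 f))) + X3 * (Y3 * dY3 f) - Y3 * dY3 f
   - cst3 (of_real b) * (Z3 * dZ3 f) + cst3 (of_real a) * (X3 * (X3 * (Z3 * dZ3 f)))"
  unfolding Xfield_def by (simp add: algebra_simps power2_eq_square)

lemma K_expand: "(cst3 \<alpha>0 + cst3 \<alpha>1 * X3 + cst3 \<alpha>2 * Y3 + cst3 \<alpha>3 * Z3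
             + cst3 (of_nat N4 * of_real a) * X3 ^ 2 - cst3 (of_nat N6 * of_real a) * X3 * Z3) * f
  = cst3 \<alpha>0 * f + cst3 \<alpha>1 * (X3 * f) + cst3 \<alpha>2 * (Y3 * f) + cst3 \<alpha>3 * (Z3 * f)
    + cst3 (of_nat N4 * of_real a) * (X3 * (X3 * f)) - cst3 (of_nat N6 * of_real a) * (X3 * (Z3 * f))"
  by (simp add: algebra_simps power2_eq_square)

lemma Eqn:
  assumes "Xfield a b c f = K * f"
    and "K = cst3 \<alpha>0 + cst3 \<alpha>1 * X3 + cst3 \<alpha>2 * Y3 + cst3 \<alpha>3 * Z3
             + cst3 (of_nat N4 * of_real a) * X3 ^ 2 - cst3 (of_nat N6 * of_real a) * X3 * Z3"
  shows "of_int i * C3 f i j k - of_int i * C3 f i (j-1) k + of_real c * of_int (i-1) * C3 f (i-1) j k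
     - of_real a * of_int (i-1) * C3 f (i-1) j (k-1) + of_int j * C3 f (i-1) j k - of_int j * C3 f i j k
     - of_real b * of_int k * C3 f i j k + of_real a * of_int k * C3 f (i-2) j k
   = \<alpha>0 * C3 f i j k + \<alpha>1 * C3 f (i-1) j k + \<alpha>2 * C3 f i (j-1) k + \<alpha>3 * C3 f i j (k-1)
     + of_nat N4 * of_real a * C3 f (i-2) j k - of_nat N6 * of_real a * C3 f (i-1) j (k-1)"
proof -
  have "C3 (Xfield a b c f) i j k = C3 (K * f) i j k" using assms(1) by simp
  then show ?thesis
    unfolding Xfield_expand assms(2) K_expand
    apply (simp only: C3_add C3_diff C3_cst C3_X C3_Y C3_Z C3_dX C3_dY C3_dZ)
    apply (simp add: algebra_simps)
    done
qed

lemma C3_eqI: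
  assumes "\<And>i j k. C3 f i j k = C3 g i j k"
  shows "f = g"
proof -
  have "\<And>i j k. coeff3 f i j k = coeff3 g i j k"
    using assms[of "int _" "int _" "int _"] by (simp add: C3_def)
  then show ?thesis
    unfolding coeff3_def by (intro poly_eqI) metis
qed

lemma coeff3_C3: "coeff3 f i j k = C3 f (int i) (int j) (int k)"
  by (simp add: C3_def)

lemma C3_shiftX: "0 \<le> i \<Longrightarrow> C3 (map_poly (map_poly (poly_shift 1)) f) i j k = C3 f (i + 1) j k"
  by (simp add: C3_def coeff3_def coeff_map_poly coeff_poly_shift nat_add_distrib)

lemma C3_shiftY: "0 \<le> j \<Longrightarrow> C3 (map_poly (poly_shift 1) f) i j k = C3 f i (j + 1) k"
  by (simp add: C3_def coeff3_def coeff_map_poly coeff_poly_shift nat_add_distrib)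

lemma C3_shiftZ: "0 \<le> k \<Longrightarrow> C3 (poly_shift 1 f) i j k = C3 f i j (k + 1)"
  by (simp add: C3_def coeff3_def coeff_poly_shift nat_add_distrib)

lemma X3_dvd:
  assumes "\<And>j k. C3 f 0 j k = 0"
  shows "f = X3 * map_poly (map_poly (poly_shift 1)) f"
proof (rule C3_eqI)
  fix i j k
  show "C3 f i j k = C3 (X3 * map_poly (map_poly (poly_shift 1)) f) i j k"
  proof (cases "1 \<le> i")
    case True
    have "C3 (map_poly (map_poly (poly_shift 1)) f) (i - 1) j k = C3 f i j k" using C3_shiftX[of "i - 1" f j k] True by simp
    then show ?thesis by (simp add: C3_X)
  next
    case False
    then have "i = 0 \<or> i < 0" by linarith
    then show ?thesis using assms by (auto simp: C3_X C3_neg)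
  qed
qed

lemma Y3_dvd:
  assumes "\<And>i k. C3 f i 0 k = 0"
  shows "f = Y3 * map_poly (poly_shift 1) f"
proof (rule C3_eqI)
  fix i j k
  show "C3 f i j k = C3 (Y3 * map_poly (poly_shift 1) f) i j k"
  proof (cases "1 \<le> j")
    case True
    have "C3 (map_poly (poly_shift 1) f) i (j - 1) k = C3 f i j k" using C3_shiftY[of "j - 1" f i k] True by simp
    then show ?thesis by (simp add: C3_Y)
  next
    case False
    then have "j = 0 \<or> j < 0" by linarith
    then show ?thesis using assms by (auto simp: C3_Y C3_neg)
  qed
qed

lemma Z3_dvd:
  assumes "\<And>i j. C3 f i j 0 = 0"
  shows "f = Z3 * poly_shift 1 f"
proof (rule C3_eqI)
  fix i j k
  show "C3 f i j k = C3 (Z3 * poly_shift 1 f) i j k"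
  proof (cases "1 \<le> k")
    case True
    have "C3 (poly_shift 1 f) i j (k - 1) = C3 f i j k" using C3_shiftZ[of "k - 1" f i j] True by simp
    then show ?thesis by (simp add: C3_Z)
  next
    case False
    then have "k = 0 \<or> k < 0" by linarith
    then show ?thesis using assms by (auto simp: C3_Z C3_neg)
  qed
qed

lemma coeff3_supp_finite: "finite {(i,j,k). coeff3 f i j k \<noteq> 0}"
proof (rule finite_subset)
  show "{(i,j,k). coeff3 f i j k \<noteq> 0} \<subseteq>
     (\<Union>k\<in>{..degree f}. \<Union>j\<in>{..degree (coeff f k)}. {..degree (coeff (coeff f k) j)} \<times> {j} \<times> {k})"
  proof clarify
    fix i j k assume h: "coeff3 f i j k \<noteq> 0"
    then have "coeff (coeff f k) j \<noteq> 0" "coeff f k \<noteq> 0" by (auto simp: coeff3_def)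
    with h show "(i, j, k) \<in> (\<Union>k\<in>{..degree f}. \<Union>j\<in>{..degree (coeff f k)}. {..degree (coeff (coeff f k) j)} \<times> {j} \<times> {k})"
      by (auto simp: coeff3_def intro!: le_degree)
  qed
qed simp

lemma C3_supp_finite: "finite {(i,j,k). C3 f i j k \<noteq> 0}"
proof (rule finite_subset)
  show "{(i,j,k). C3 f i j k \<noteq> 0} \<subseteq> (\<lambda>(i,j,k). (int i, int j, int k)) ` {(i,j,k). coeff3 f i j k \<noteq> 0}"
  proof clarify
    fix i j k assume h: "C3 f i j k \<noteq> 0"
    then have "0 \<le> i" "0 \<le> j" "0 \<le> k" by (auto simp: C3_def split: if_splits)
    with h show "(i, j, k) \<in> (\<lambda>(i,j,k). (int i, int j, int k)) ` {(i,j,k). coeff3 f i j k \<noteq> 0}"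
      by (intro image_eqI[where x="(nat i, nat j, nat k)"]) (auto simp: C3_def)
  qed
qed (use coeff3_supp_finite in simp)

lemma tdeg3_le1:
  assumes "\<And>i j k. C3 f i j k \<noteq> 0 \<Longrightarrow> i + j + k \<le> 1"
  shows "tdeg3 f \<le> 1"
proof -
  let ?S = "{i + j + k | i j k. coeff3 f i j k \<noteq> 0}"
  have "?S = (\<lambda>(i,j,k). i+j+k) ` {(i,j,k). coeff3 f i j k \<noteq> 0}"
  proof (rule set_eqI, rule iffI)
    fix s assume "s \<in> ?S"
    then obtain i j k where "s = i + j + k" "coeff3 f i j k \<noteq> 0" by blast
    then show "s \<in> (\<lambda>(i,j,k). i+j+k) ` {(i,j,k). coeff3 f i j k \<noteq> 0}"
      by (intro image_eqI[where x="(i,j,k)"]) auto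
  qed auto
  hence fin: "finite ?S" using coeff3_supp_finite by simp
  have "s \<le> 1" if "s \<in> ?S" for s
  proof -
    from that obtain i j k where "s = i + j + k" "coeff3 f i j k \<noteq> 0" by blast
    then show ?thesis using assms[of "int i" "int j" "int k"] by (simp add: coeff3_C3)
  qed
  then show ?thesis unfolding tdeg3_def using fin by (simp add: Max_le_iff)
qed

lemma unit3: "is_unit (u::mpoly3) \<Longrightarrow> \<exists>c. u = [:[:[:c:]:]:]"
  by (auto simp: is_unit_poly_iff)

lemma pX_not_unit: "\<not> ([:0, 1:] :: 'a::idom poly) dvd 1"
  by (auto simp: is_unit_poly_iff)

lemma not_unit_V: "V = X3 \<or> V = Y3 \<or> V = Z3 \<Longrightarrow> \<not> is_unit V"
  using pX_not_unit[where 'a=complex] pX_not_unit[where 'a="complex poly"] pX_not_unit[where 'a="complex poly poly"]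
  by (auto simp: X3_def Y3_def Z3_def is_unit_poly_iff)

lemma irr_not_dvd:
  assumes "irreducible f" "f = V * u" "V = X3 \<or> V = Y3 \<or> V = Z3"
  shows "tdeg3 f \<le> 1"
proof -
  have "\<not> is_unit V" using assms(3) by (rule not_unit_V)
  hence "is_unit u" using irreducibleD[OF assms(1) assms(2)] by auto
  then obtain c where u: "u = [:[:[:c:]:]:]" using unit3 by blast
  have Cu: "i = 0 \<and> j = 0 \<and> k = 0" if "C3 u i j k \<noteq> 0" for i j k
  proof -
    have "0 \<le> i" "0 \<le> j" "0 \<le> k" "coeff3 u (nat i) (nat j) (nat k) \<noteq> 0"
      using that by (auto simp: C3_def split: if_splits)
    then show ?thesis unfolding u coeff3_def
      by (cases "nat k"; cases "nat j"; cases "nat i") auto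
  qed
  show ?thesis
  proof (rule tdeg3_le1)
    fix i j k assume h: "C3 f i j k \<noteq> 0"
    show "i + j + k \<le> 1"
      using assms(3)
    proof (elim disjE)
      assume "V = X3" then show ?thesis using h Cu[of "i - 1" j k] by (auto simp: assms(2) C3_X)
    next
      assume "V = Y3" then show ?thesis using h Cu[of i "j - 1" k] by (auto simp: assms(2) C3_Y)
    next
      assume "V = Z3" then show ?thesis using h Cu[of i j "k - 1"] by (auto simp: assms(2) C3_Z)
    qed
  qed
qed

lemma slices:
  assumes "irreducible f" "tdeg3 f > 1"
  shows "\<exists>j k. C3 f 0 j k \<noteq> 0" "\<exists>i k. C3 f i 0 k \<noteq> 0" "\<exists>i j. C3 f i j 0 \<noteq> 0"
proof -
  show "\<exists>j k. C3 f 0 j k \<noteq> 0"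
  proof (rule ccontr)
    assume "\<not> ?thesis"
    then have "f = X3 * map_poly (map_poly (poly_shift 1)) f" by (intro X3_dvd) auto
    then have "tdeg3 f \<le> 1" using assms(1) irr_not_dvd by blast
    then show False using assms(2) by simp
  qed
  show "\<exists>i k. C3 f i 0 k \<noteq> 0"
  proof (rule ccontr)
    assume "\<not> ?thesis"
    then have "f = Y3 * map_poly (poly_shift 1) f" by (intro Y3_dvd) auto
    then have "tdeg3 f \<le> 1" using assms(1) irr_not_dvd by blast
    then show False using assms(2) by simp
  qed
  show "\<exists>i j. C3 f i j 0 \<noteq> 0"
  proof (rule ccontr)
    assume "\<not> ?thesis"
    then have "f = Z3 * poly_shift 1 f" by (intro Z3_dvd) auto
    then have "tdeg3 f \<le> 1" using assms(1) irr_not_dvd by blast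
    then show False using assms(2) by simp
  qed
qed

lemma max_pick:
  fixes g :: "'a \<Rightarrow> int"
  assumes "finite S" "S \<noteq> {}"
  shows "\<exists>x\<in>S. \<forall>y\<in>S. g y \<le> g x"
proof -
  have "Max (g ` S) \<in> g ` S" using assms by simp
  then obtain x where "x \<in> S" "g x = Max (g ` S)" by auto
  moreover have "\<forall>y\<in>S. g y \<le> Max (g ` S)" using assms by simp
  ultimately show ?thesis by metis
qed

theorem lemma4p3:
  fixes a b c :: real and f :: mpoly3
    and \<alpha>0 \<alpha>1 \<alpha>2 \<alpha>3 :: complex and N4 N6 :: nat
  assumes "a > 0" and "b \<ge> 0" and "c \<ge> 0"
    and "irreducible f" and "tdeg3 f > 1"
    and "K = cst3 \<alpha>0 + cst3 \<alpha>1 * X3 + cst3 \<alpha>2 * Y3 + cst3 \<alpha>3 * Z3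
             + cst3 (of_nat N4 * of_real a) * X3 ^ 2 - cst3 (of_nat N6 * of_real a) * X3 * Z3"
    and "K \<noteq> 0"
    and "darboux a b c f K"
  shows "\<alpha>0 = 0 \<and> \<alpha>1 = 0 \<and> \<alpha>3 = 0 \<and> N4 = 0 \<and> N6 = 0"
proof -
  define F where "F = C3 f"
  have E: "of_int i * F i j k - of_int i * F i (j-1) k + of_real c * of_int (i-1) * F (i-1) j k
     - of_real a * of_int (i-1) * F (i-1) j (k-1) + of_int j * F (i-1) j k - of_int j * F i j k
     - of_real b * of_int k * F i j k + of_real a * of_int k * F (i-2) j k
   = \<alpha>0 * F i j k + \<alpha>1 * F (i-1) j k + \<alpha>2 * F i (j-1) k + \<alpha>3 * F i j (k-1)
     + of_nat N4 * of_real a * F (i-2) j k - of_nat N6 * of_real a * F (i-1) j (k-1)" for i j k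
    unfolding F_def using assms(6,8) by (intro Eqn) (auto simp: darboux_def)
  have Fn1: "F i j k = 0" if "i < 0" for i j k using that by (simp add: F_def C3_neg)
  have Fn2: "F i j k = 0" if "j < 0" for i j k using that by (simp add: F_def C3_neg)
  have Fn3: "F i j k = 0" if "k < 0" for i j k using that by (simp add: F_def C3_neg)
  have fin: "finite {(i,j,k). F i j k \<noteq> 0}" unfolding F_def by (rule C3_supp_finite)
  have a0: "(of_real a :: complex) \<noteq> 0" using assms(1) by simp
  have sx: "\<exists>j k. F 0 j k \<noteq> 0" using slices(1)[OF assms(4,5)] F_def by blast
  have sy: "\<exists>i k. F i 0 k \<noteq> 0" using slices(2)[OF assms(4,5)] F_def by blast
  have sz: "\<exists>i j. F i j 0 \<noteq> 0" using slices(3)[OF assms(4,5)] F_def by blast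

  define S0 where "S0 = {(j,k). F 0 j k \<noteq> 0}"
  have finS0: "finite S0"
    by (rule finite_subset[OF _ finite_imageI[OF fin, of "\<lambda>(i,j,k). (j,k)"]])
       (force simp: S0_def image_iff)
  have neS0: "S0 \<noteq> {}" using sx by (auto simp: S0_def)

  have al3: "\<alpha>3 = 0"
  proof -
    obtain x where x: "x \<in> S0" "\<forall>y\<in>S0. snd y \<le> snd x" using max_pick[OF finS0 neS0, of snd] by blast
    obtain j m where xjm: "x = (j, m)" by (cases x)
    have nz: "F 0 j m \<noteq> 0" using x(1) xjm by (simp add: S0_def)
    have z: "F 0 j' (m + 1) = 0" for j' using x(2) xjm by (force simp: S0_def)
    have "\<alpha>3 * F 0 j m = 0" using E[of 0 j "m + 1"] by (simp add: z Fn1)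
    then show ?thesis using nz by simp
  qed

  have al2: "\<alpha>2 = 0"
  proof -
    obtain x where x: "x \<in> S0" "\<forall>y\<in>S0. fst y \<le> fst x" using max_pick[OF finS0 neS0, of fst] by blast
    obtain j m where xjm: "x = (j, m)" by (cases x)
    have nz: "F 0 j m \<noteq> 0" using x(1) xjm by (simp add: S0_def)
    have z: "F 0 (j + 1) k' = 0" for k' using x(2) xjm by (force simp: S0_def)
    have "\<alpha>2 * F 0 j m = 0" using E[of 0 "j + 1" m] by (simp add: z Fn1 al3)
    then show ?thesis using nz by simp
  qed

  have n4: "N4 = 0"
  proof -
    define S2 where "S2 = {(i,j). F i j 0 \<noteq> 0}"
    have finS2: "finite S2"
      by (rule finite_subset[OF _ finite_imageI[OF fin, of "\<lambda>(i,j,k). (i,j)"]])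
         (force simp: S2_def image_iff)
    have neS2: "S2 \<noteq> {}" using sz by (auto simp: S2_def)
    obtain x where x: "x \<in> S2" "\<forall>y\<in>S2. fst y \<le> fst x" using max_pick[OF finS2 neS2, of fst] by blast
    obtain i j where xij: "x = (i, j)" by (cases x)
    have nz: "F i j 0 \<noteq> 0" using x(1) xij by (simp add: S2_def)
    have z1: "F (i + 2) j' 0 = 0" for j' using x(2) xij by (force simp: S2_def)
    have z2: "F (i + 1) j' 0 = 0" for j' using x(2) xij by (force simp: S2_def)
    have z3: "F (1 + i) j' 0 = 0" for j' using z2[of j'] by (simp add: add.commute)
    have "of_nat N4 * of_real a * F i j 0 = 0" using E[of "i + 2" j 0] by (simp add: z1 z2 z3 Fn3 al3)
    then show ?thesis using nz a0 by simp
  qed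

  define S where "S = {(i,j,k). F i j k \<noteq> 0}"
  have neS: "S \<noteq> {}" using sx by (auto simp: S_def)
  obtain x where x: "x \<in> S" "\<forall>y\<in>S. (\<lambda>(i,j,k). i + 2*j) y \<le> (\<lambda>(i,j,k). i + 2*j) x"
    using max_pick[OF fin[folded S_def] neS] by blast
  obtain i0 j0 k0 where x0: "x = (i0, j0, k0)" by (cases x)
  define W where "W = i0 + 2*j0"
  have nz0: "F i0 j0 k0 \<noteq> 0" using x(1) x0 by (simp add: S_def)
  have hiW: "F i j k = 0" if "W < i + 2*j" for i j k
    using x(2) that by (force simp: S_def x0 W_def)
  have R: "of_int i * F i j k = of_real a * of_int k * F (i-2) (j+1) k" if hW: "i + 2*j = W" for i j k
  proof -
    have z1: "F i (j+1) k = 0" by (rule hiW) (use hW in presburger)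
    have z2: "F (i-1) (j+1) k = 0" by (rule hiW) (use hW in presburger)
    have z3: "F (i-1) (j+1) (k-1) = 0" by (rule hiW) (use hW in presburger)
    have z4: "F i (j+1) (k-1) = 0" by (rule hiW) (use hW in presburger)
    show ?thesis using E[of i "j+1" k] unfolding z1 z2 z3 z4 al2 al3 n4 by (simp add: algebra_simps)
  qed
  have top: "F i j k = 0" if "i + 2*j = W" "i \<noteq> 0 \<or> k \<noteq> 0" for i j k
  proof (cases "k = 0")
    case True
    then have "i \<noteq> 0" using that by simp
    then show ?thesis using R[OF that(1), of k] True by simp
  next
    case False
    show ?thesis
    proof (cases "k < 0 \<or> j < 0")
      case True then show ?thesis using Fn2 Fn3 by blast
    next
      case False2: False
      have ch: "F (W - 2 * int t) (int t) k = 0" for t :: nat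
      proof (induction t)
        case 0
        have "of_int (W+2) * F (W+2) (-1) k = of_real a * of_int k * F W 0 k"
          using R[of "W+2" "-1" k] by simp
        then show ?case using Fn2[of "-1" "W+2" k] a0 False by simp
      next
        case (Suc t)
        have "of_int (W - 2 * int t) * F (W - 2 * int t) (int t) k
              = of_real a * of_int k * F (W - 2 * int t - 2) (int t + 1) k"
          using R[of "W - 2 * int t" "int t" k] by simp
        then have "F (W - 2 * int t - 2) (int t + 1) k = 0" using Suc.IH a0 False by simp
        moreover have "F (W - 2 * int (Suc t)) (int (Suc t)) k = F (W - 2 * int t - 2) (int t + 1) k"
          by (simp add: algebra_simps)
        ultimately show ?case by metis
      qed
      have "i = W - 2 * int (nat j)" "j = int (nat j)" using that(1) False2 by simp_all
      then show ?thesis using ch[of "nat j"] by metis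
    qed
  qed
  have i00: "i0 = 0" "k0 = 0" using top[of i0 j0 k0] nz0 W_def by auto
  define q where "q = j0"
  have Fq: "F 0 q 0 \<noteq> 0" using nz0 i00 q_def by simp
  have q0: "0 \<le> q" using Fq Fn2 by force
  have Wq: "W = 2 * q" using W_def i00 q_def by simp

  have n6: "N6 = 0"
  proof -
    have e1: "F 1 (q - 1) 1 = of_nat N6 * of_real a * F 0 q 0"
    proof -
      have z1: "F 1 q 1 = 0" by (rule hiW) (simp add: Wq)
      have z2: "F 0 q 1 = 0" by (rule top) (simp_all add: Wq)
      show ?thesis using E[of 1 q 1] unfolding z1 al2 al3 n4 by (simp add: Fn1 z2)
    qed
    show ?thesis
    proof (rule ccontr)
      assume N6nz: "N6 \<noteq> 0"
      then have nz1: "F 1 (q - 1) 1 \<noteq> 0" using e1 Fq a0 by simp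
      have "q \<noteq> 0"
      proof
        assume "q = 0" then show False using nz1 Fn2[of "-1" 1 1] by simp
      qed
      then have q1: "1 \<le> q" using q0 by simp
      have ch: "int t \<le> q - 1 \<longrightarrow> F (1 + 2 * int t) (q - 1 - int t) 1 \<noteq> 0" for t :: nat
      proof (induction t)
        case 0 then show ?case using nz1 by simp
      next
        case (Suc t)
        show ?case
        proof
          assume lt: "int (Suc t) \<le> q - 1"
          then have IH: "F (1 + 2 * int t) (q - 1 - int t) 1 \<noteq> 0" using Suc.IH by simp
          let ?i = "3 + 2 * int t" and ?j = "q - 1 - int t"
          have z1: "F ?i ?j 1 = 0" by (rule hiW) (simp add: Wq)
          have z2: "F (?i - 1) ?j 1 = 0" by (rule top) (use lt in \<open>simp_all add: Wq\<close>)
          have z3: "F (?i - 1) ?j (1 - 1) = 0" by (rule top) (use lt in \<open>simp_all add: Wq\<close>)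
          have "of_int (- ?i) * F ?i (?j - 1) 1 + of_real a * F (?i - 2) ?j 1 = 0"
            using E[of ?i ?j 1] unfolding z1 z2 z3 al2 al3 n4 by (simp add: algebra_simps)
          moreover have "?i - 2 = 1 + 2 * int t" by simp
          ultimately have "of_int ?i * F ?i (?j - 1) 1 = of_real a * F (1 + 2 * int t) (q - 1 - int t) 1"
            by (simp add: algebra_simps)
          then have "F ?i (?j - 1) 1 \<noteq> 0" using IH a0 by auto
          moreover have "F (1 + 2 * int (Suc t)) (q - 1 - int (Suc t)) 1 = F ?i (?j - 1) 1"
            by (simp add: algebra_simps)
          ultimately show "F (1 + 2 * int (Suc t)) (q - 1 - int (Suc t)) 1 \<noteq> 0" by metis
        qed
      qed
      have "F (2 * q - 1) 0 1 \<noteq> 0" using ch[of "nat (q - 1)"] q1 by simp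
      moreover
      have z1: "F (2 * q + 1) 0 1 = 0" by (rule hiW) (simp add: Wq)
      have z2: "F (2 * q + 1 - 1) 0 1 = 0" by (rule top) (use q1 in \<open>simp_all add: Wq\<close>)
      have z3: "F (2 * q + 1 - 1) 0 (1 - 1) = 0" by (rule top) (use q1 in \<open>simp_all add: Wq\<close>)
      have "of_real a * F (2 * q - 1) 0 1 = 0"
        using E[of "2 * q + 1" 0 1] unfolding z1 z2 z3 al2 al3 n4 by (simp add: Fn2)
      ultimately show False using a0 by simp
    qed
  qed

  have al0: "\<alpha>0 = - of_int q"
  proof -
    have "- of_int q * F 0 q 0 = \<alpha>0 * F 0 q 0"
      using E[of 0 q 0] unfolding al2 al3 n4 n6 by (simp add: Fn1)
    then show ?thesis using Fq by (metis mult_cancel_right)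
  qed

  define S1 where "S1 = {(i,k). F i 0 k \<noteq> 0}"
  have finS1: "finite S1"
    by (rule finite_subset[OF _ finite_imageI[OF fin, of "\<lambda>(i,j,k). (i,k)"]])
       (force simp: S1_def image_iff)
  have neS1: "S1 \<noteq> {}" using sy by (auto simp: S1_def)

  have al1: "\<alpha>1 = 0"
  proof -
    obtain x where x: "x \<in> S1" "\<forall>y\<in>S1. snd y \<le> snd x" using max_pick[OF finS1 neS1, of snd] by blast
    obtain i m where xim: "x = (i, m)" by (cases x)
    have nz: "F i 0 m \<noteq> 0" using x(1) xim by (simp add: S1_def)
    have z: "F i' 0 (m + 1) = 0" for i' using x(2) xim by (force simp: S1_def)
    have i0: "i' = 0" if "F i' 0 m \<noteq> 0" for i'
    proof -
      have "of_real a * of_int i' * F i' 0 m = 0"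
        using E[of "i' + 1" 0 "m + 1"] unfolding al2 al3 n4 n6 z by (simp add: Fn2 z)
      then show ?thesis using that a0 by simp
    qed
    have "F 0 0 m \<noteq> 0" using nz i0[OF nz] by simp
    moreover have "F 1 0 m = 0" using i0[of 1] by auto
    moreover have "\<alpha>1 * F 0 0 m = 0 \<or> F 1 0 m \<noteq> 0"
      using E[of 1 0 m] unfolding al2 al3 n4 n6 by (auto simp: Fn1 Fn2)
    ultimately show ?thesis by simp
  qed

  have qz: "q = 0"
  proof -
    obtain x where x: "x \<in> S1" "\<forall>y\<in>S1. (\<lambda>(i,k). i + k) y \<le> (\<lambda>(i,k). i + k) x"
      using max_pick[OF finS1 neS1] by blast
    obtain i2 k2 where x2: "x = (i2, k2)" by (cases x)
    define n where "n = i2 + k2"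
    have nz2: "F i2 0 k2 \<noteq> 0" using x(1) x2 by (simp add: S1_def)
    have hin: "F i 0 k = 0" if "n < i + k" for i k using x(2) that by (force simp: S1_def x2 n_def)
    have Fn0: "F n 0 0 \<noteq> 0"
    proof
      assume h0: "F n 0 0 = 0"
      have ch: "F (n - int t) 0 (int t) = 0" for t :: nat
      proof (induction t)
        case 0 then show ?case using h0 by simp
        case (Suc t)
        let ?i = "n - int t + 1" and ?k = "int t + 1"
        have z1: "F ?i 0 ?k = 0" by (rule hin) simp
        have z2: "F (?i - 1) 0 ?k = 0" by (rule hin) simp
        have "of_real a * of_int ?k * F (?i - 2) 0 ?k = 0"
          using E[of ?i 0 ?k] unfolding al1 al2 al3 n4 n6 z1 z2 by (simp add: Fn2 Suc.IH)
        moreover have "(of_nat t + 1 :: complex) \<noteq> 0" using of_nat_neq_0[of t, where 'a=complex] by (simp add: add.commute)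
        ultimately have "F (?i - 2) 0 ?k = 0" using a0 by simp
        moreover have "F (n - int (Suc t)) 0 (int (Suc t)) = F (?i - 2) 0 ?k" by (simp add: algebra_simps)
        ultimately show ?case by metis
      qed
      have "0 \<le> k2" using nz2 Fn3 by force
      then have "F i2 0 k2 = 0" using ch[of "nat k2"] n_def by simp
      then show False using nz2 by simp
    qed
    have n0: "0 \<le> n" using Fn0 Fn1 by force
    have cn: "of_real c * of_int n * F n 0 0 = 0"
    proof -
      have z1: "F (n + 1) 0 0 = 0" by (rule hin) simp
      show ?thesis using E[of "n + 1" 0 0] unfolding al1 al2 al3 n4 n6 z1 by (simp add: Fn2 Fn3)
    qed
    have cn': "of_real c * of_int (n - 1) * F (n - 1) 0 0 = 0"
    proof (cases "n = 0")
      case True then show ?thesis using Fn1 by simp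
    next
      case False then have "c = 0" using cn Fn0 by simp
      then show ?thesis by simp
    qed
    have "of_int n * F n 0 0 = - of_int q * F n 0 0"
      using E[of n 0 0] cn' unfolding al1 al2 al3 n4 n6 al0 by (auto simp: Fn2 Fn3)
    then have "(of_int n :: complex) = - of_int q" using Fn0 by (metis mult_cancel_right)
    then have "n = - q" by (metis of_int_eq_iff of_int_minus)
    then show ?thesis using n0 q0 by simp
  qed

  show ?thesis using al0 al1 al3 n4 n6 qz by simp
qed

end
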